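(* Let $q\ge 3$ be a prime power and $n\ge 2d\ge 2$. For all $0\le i\le d-1$ and $1\le j\le d$, $$|G_j(i+1)|<|G_j(i)|.$$
   Context: For integers $m\ge 0$ and $l$, ${m\brack l}=\prod_{t=1}^{l}\frac{q^{m-t+1}-1}{q^t-1}$ for $l\ge0$ and $0$ for $l<0$. For $0\le i,j\le d$, $$G_j(i)=\sum_{h=\max\{0,i-j\}}^{\min\{i,d-j\}}(-1)^{i-h}q^{j(j-i+h)+\binom{i-h}{2}}{i\brack h}{d-h\brack j}{n-d-i+h\brack n-d-j};$$ $G_j(i)$ ($0\le i\le d$) are the eigenvalues of the Grassmann graph $G_q(n,d,j)$, whose vertices are the $d$-dimensional subspaces of $\mathbb F_q^n$, two being adjacent iff their intersection has dimension $d-j$. *)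

theory Defs
  imports Complex_Main "HOL-Computational_Algebra.Primes"
begin

definition gbinom :: "real \<Rightarrow> int \<Rightarrow> int \<Rightarrow> real" where
  "gbinom q m l = (if l < 0 then 0 else
     (\<Prod>t\<in>{1..l}. (q ^ nat (m - t + 1) - 1) / (q ^ nat t - 1)))"

text \<open>Eigenvalue G_j(i) of the Grassmann graph G_q(n,d,j).\<close>
definition Geig :: "real \<Rightarrow> int \<Rightarrow> int \<Rightarrow> int \<Rightarrow> int \<Rightarrow> real" where
  "Geig q n d j i = (\<Sum>h\<in>{max 0 (i - j)..min i (d - j)}.
      (-1) ^ nat (i - h) * q ^ (nat (j * (j - i + h)) + (nat (i - h) choose 2))
      * gbinom q i h * gbinom q (d - h) j * gbinom q (n - d - i + h) (n - d - j))"

end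

theory Submission
  imports Defs
begin


definition P :: "real \<Rightarrow> nat \<Rightarrow> nat \<Rightarrow> real" where
  "P q m l = (\<Prod>t\<in>{1..l}. (q ^ (m + 1 - t) - 1) / (q ^ t - 1))"

lemma P0[simp]: "P q m 0 = 1" by (simp add: P_def)

lemma PSuc: "P q m (Suc l) = P q m l * ((q ^ (m - l) - 1) / (q ^ Suc l - 1))"
proof -
  have "{1..Suc l} = insert (Suc l) {1..l}" by auto
  then show ?thesis unfolding P_def by simp
qed

lemma L1: assumes "q > 1" shows "P q m (Suc l) * (q ^ Suc l - 1) = P q m l * (q ^ (m - l) - 1)"
proof -
  have "q ^ Suc l > 1" using one_less_power[OF assms, of "Suc l"] by simp
  then show ?thesis by (simp add: PSuc)
qed

lemma Pzero: assumes "q > 1" "m < l" shows "P q m l = 0"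
  using assms(2)
proof (induction l)
  case 0 then show ?case by simp
next
  case (Suc l)
  show ?case
  proof (cases "m < l")
    case True then show ?thesis using Suc by (simp add: PSuc)
  next
    case False then have "m = l" using Suc by simp
    then show ?thesis by (simp add: PSuc)
  qed
qed

lemma Ppos: assumes "q > 1" "l \<le> m" shows "P q m l > 0"
  using assms(2)
proof (induction l)
  case 0 then show ?case by simp
next
  case (Suc l)
  have a: "q ^ (m - l) > 1" using one_less_power[OF assms(1), of "m - l"] Suc by simp
  have b: "q ^ Suc l > 1" using one_less_power[OF assms(1), of "Suc l"] by simp
  show ?case using Suc a b by (simp add: PSuc)
qed

lemma Pnn: assumes "q > 1" shows "P q m l \<ge> 0"
  using Ppos[OF assms, of l m] Pzero[OF assms, of m l] by (cases "l \<le> m") auto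

lemma L2: assumes "q > 1" "l \<le> M"
  shows "P q (Suc M) l * (q ^ (Suc M - l) - 1) = P q M l * (q ^ Suc M - 1)"
  using assms(2)
proof (induction l)
  case 0 then show ?case by simp
next
  case (Suc l)
  have b: "q ^ Suc l - 1 \<noteq> 0" using one_less_power[OF assms(1), of "Suc l"] by simp
  have IH: "P q (Suc M) l * (q ^ (Suc M - l) - 1) = P q M l * (q ^ Suc M - 1)" using Suc by simp
  have e: "Suc M - Suc l = M - l" "Suc M - l = Suc (M - l)" using Suc by auto
  have "P q (Suc M) (Suc l) * (q ^ (Suc M - Suc l) - 1)
      = (P q (Suc M) l * (q ^ (Suc M - l) - 1)) * (q ^ (M - l) - 1) / (q ^ Suc l - 1)"
    by (simp add: PSuc e)
  also have "\<dots> = P q M l * (q ^ Suc M - 1) * (q ^ (M - l) - 1) / (q ^ Suc l - 1)" using IH by simp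
  also have "\<dots> = P q M (Suc l) * (q ^ Suc M - 1)" by (simp add: PSuc)
  finally show ?case .
qed

lemma L3: assumes "q > 1" "l \<le> M"
  shows "P q (Suc M) (Suc l) * (q ^ Suc l - 1) = P q M l * (q ^ Suc M - 1)"
proof -
  have "P q (Suc M) (Suc l) * (q ^ Suc l - 1) = P q (Suc M) l * (q ^ (Suc M - l) - 1)"
    using L1[OF assms(1)] by simp
  also have "\<dots> = P q M l * (q ^ Suc M - 1)" using L2[OF assms] .
  finally show ?thesis .
qed

lemma Pdiag: assumes "q > 1" shows "P q m m = 1"
proof (induction m)
  case 0 then show ?case by simp
next
  case (Suc m)
  have b: "q ^ Suc m - 1 \<noteq> 0" using one_less_power[OF assms(1), of "Suc m"] by simp
  have "P q (Suc m) (Suc m) * (q ^ Suc m - 1) = 1 * (q ^ Suc m - 1)"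
    using L3[OF assms, of m m] Suc by simp
  then show ?case using b by simp
qed

lemma gbinom_P: "gbinom q (int m) (int l) = P q m l"
proof -
  have "gbinom q (int m) (int l) = (\<Prod>t\<in>int ` {1..l}. (q ^ nat (int m - t + 1) - 1) / (q ^ nat t - 1))"
    by (simp add: gbinom_def image_int_atLeastAtMost)
  also have "\<dots> = (\<Prod>t\<in>{1..l}. (q ^ nat (int m - int t + 1) - 1) / (q ^ nat (int t) - 1))"
    by (subst prod.reindex) auto
  also have "\<dots> = P q m l" unfolding P_def
  proof (rule prod.cong)
    fix t assume "t \<in> {1..l}"
    have "nat (int m - int t + 1) = m + 1 - t" by linarith
    then show "(q ^ nat (int m - int t + 1) - 1) / (q ^ nat (int t) - 1) = (q ^ (m + 1 - t) - 1) / (q ^ t - 1)" by simp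
  qed simp
  finally show ?thesis .
qed



lemma polyM:
  fixes q B X Y E W :: real
  assumes q: "q \<ge> 3" and B: "B \<ge> 1" and X: "X \<ge> q" and Y: "Y \<ge> q" and E: "E \<ge> q" and W: "W \<ge> X * Y"
  shows "(X - 1) * (E * Y * B - 1) * (Y - 1) \<le> Y * (q * B - 1) * (E - 1) * (W - 1)"
proof -
  have YB: "Y * B \<ge> 3"
  proof -
    have "3 * 1 \<le> Y * B" using q Y B by (intro mult_mono) auto
    then show ?thesis by simp
  qed
  have h1: "(E * Y * B - 1) * (q - 1) \<le> q * Y * B * (E - 1)"
  proof -
    have "E * (Y * B) \<ge> q * (Y * B)" using E YB by (intro mult_right_mono) auto
    then show ?thesis using q by (simp add: algebra_simps)
  qed
  have h2: "(X - 1) * (Y - 1) \<le> W - 1" using W X Y q by (simp add: algebra_simps)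
  have h3: "q * B \<le> (q * B - 1) * (q - 1)"
  proof -
    have "q * B * (q - 2) \<ge> q * 1 * 1" using q B by (intro mult_mono) auto
    then show ?thesis by (simp add: algebra_simps)
  qed
  have X1: "X - 1 \<ge> 0" "Y - 1 \<ge> 0" "E - 1 \<ge> 0" using X Y E q by auto
  have "(X - 1) * (E * Y * B - 1) * (Y - 1) * (q - 1) = ((X - 1) * (Y - 1)) * ((E * Y * B - 1) * (q - 1))"
    by (simp add: algebra_simps)
  also have "\<dots> \<le> ((X - 1) * (Y - 1)) * (q * Y * B * (E - 1))"
    using h1 X1 by (intro mult_left_mono) auto
  also have "\<dots> = (Y * (E - 1)) * (((X - 1) * (Y - 1)) * (q * B))" by (simp add: algebra_simps)
  also have "\<dots> \<le> (Y * (E - 1)) * ((W - 1) * ((q * B - 1) * (q - 1)))"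
  proof (rule mult_left_mono)
    show "(X - 1) * (Y - 1) * (q * B) \<le> (W - 1) * ((q * B - 1) * (q - 1))"
    proof (rule mult_mono[OF h2 h3])
      have "X * Y \<ge> 1 * 1" using X Y q by (intro mult_mono) auto
      then show "0 \<le> W - 1" using W by simp
      show "0 \<le> q * B" using q B by simp
    qed
    show "0 \<le> Y * (E - 1)" using X1 q Y by simp
  qed
  also have "\<dots> = Y * (q * B - 1) * (E - 1) * (W - 1) * (q - 1)" by (simp add: algebra_simps)
  finally show ?thesis using q by simp
qed

lemma polyA:
  fixes q Qa Qj Qi Qm N :: real
  assumes q: "q \<ge> 3" and a: "Qa \<ge> q" and j: "Qj \<ge> q" and i: "Qi \<ge> 1" and m: "Qm \<ge> q * Qi * Qj"
  shows "4 * ((Qi - 1) * (q * Qa * Qj - 1) * (Qj - 1)) \<le> ((q - 1) * (q * Qa - 1) * (Qm - 1)) * Qj"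
proof -
  have qj1: "q * Qj \<ge> 1"
  proof -
    have "1 * 1 \<le> q * Qj" using q j by (intro mult_mono) auto
    then show ?thesis by simp
  qed
  have h1: "(Qi - 1) * (q * Qj) \<le> Qm - 1" using m qj1 by (simp add: algebra_simps)
  have h2: "(q * Qa * Qj - 1) * (q - 1) \<le> q * Qj * (q * Qa - 1)"
  proof -
    have "q * Qa * Qj \<ge> q * 1 * Qj" using q a j by (intro mult_mono) auto
    then show ?thesis using q by (simp add: algebra_simps)
  qed
  have qaj: "q * Qa * Qj \<ge> 1 * 1 * 1" using q a j by (intro mult_mono) auto
  have pos: "Qi - 1 \<ge> 0" "q * Qa * Qj - 1 \<ge> 0" "Qj - 1 \<ge> 0" "q * Qj > 0" "q - 1 \<ge> 2"
    using q a j i qaj qj1 by auto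
  have "(Qi - 1) * (q * Qa * Qj - 1) * (Qj - 1) * (q - 1) * (q * Qj)
      = ((Qi - 1) * (q * Qj)) * ((q * Qa * Qj - 1) * (q - 1)) * (Qj - 1)" by (simp add: algebra_simps)
  also have "\<dots> \<le> (Qm - 1) * (q * Qj * (q * Qa - 1)) * Qj"
  proof (rule mult_mono[OF mult_mono[OF h1 h2]])
    have "1 * 1 \<le> q * Qa" using q a by (intro mult_mono) auto
    then have qa1: "q * Qa - 1 \<ge> 0" by simp
    have qm: "Qm - 1 \<ge> 0" using h1 pos by (smt (verit) mult_nonneg_nonneg)
    show "0 \<le> Qm - 1" using qm .
    show "0 \<le> (q * Qa * Qj - 1) * (q - 1)" using pos by simp
    show "Qj - 1 \<le> Qj" by simp
    show "0 \<le> (Qm - 1) * (q * Qj * (q * Qa - 1))" using qm qa1 pos by simp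
    show "0 \<le> Qj - 1" using pos by simp
  qed
  also have "\<dots> = ((Qm - 1) * (q * Qa - 1) * Qj) * (q * Qj)" by (simp add: algebra_simps)
  finally have h4: "(Qi - 1) * (q * Qa * Qj - 1) * (Qj - 1) * (q - 1) \<le> (Qm - 1) * (q * Qa - 1) * Qj"
    using pos(4) by (simp only: mult_le_cancel_right)
  have N0: "(Qi - 1) * (q * Qa * Qj - 1) * (Qj - 1) \<ge> 0" using pos by simp
  have "4 * ((Qi - 1) * (q * Qa * Qj - 1) * (Qj - 1)) \<le> ((q - 1) * (q - 1)) * ((Qi - 1) * (q * Qa * Qj - 1) * (Qj - 1))"
  proof (rule mult_right_mono[OF _ N0])
    have "(2::real) * 2 \<le> (q - 1) * (q - 1)" using pos(5) by (intro mult_mono) auto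
    then show "4 \<le> (q - 1) * (q - 1)" by simp
  qed
  also have "\<dots> = (q - 1) * ((Qi - 1) * (q * Qa * Qj - 1) * (Qj - 1) * (q - 1))" by (simp add: algebra_simps)
  also have "\<dots> \<le> (q - 1) * ((Qm - 1) * (q * Qa - 1) * Qj)" using h4 pos by (intro mult_left_mono) auto
  finally show ?thesis by (simp add: algebra_simps)
qed

lemma polyB:
  fixes q B U V W :: real
  assumes q: "q \<ge> 3" and B: "B \<ge> 1" and U: "U \<ge> 1" and V: "V \<ge> q" and W: "W \<ge> U * V"
  shows "(V - 1) * ((q * B * U - 1) * (q - 1) + (U - 1) * (q * B * V - 1)) < V * (q - 1) * (q * B - 1) * (W - 1)"
proof -
  define A where "A = q * B"
  have A: "A \<ge> 3"
  proof -
    have "3 * 1 \<le> q * B" using q B by (intro mult_mono) auto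
    then show ?thesis unfolding A_def by simp
  qed
  have s1: "V * V * (2 * q - 5) \<ge> 3 * (q - 2) * V"
  proof -
    have "V * (2 * q - 5) \<ge> q * (2 * q - 5)" using V q by (intro mult_right_mono) auto
    moreover have "q * (2 * q - 5) \<ge> 3 * (q - 2)"
    proof -
      have "(q - 1) * (q - 3) \<ge> 0" using q by simp
      then show ?thesis by (simp add: algebra_simps)
    qed
    ultimately have "V * (2 * q - 5) \<ge> 3 * (q - 2)" by linarith
    then have "V * (V * (2 * q - 5)) \<ge> V * (3 * (q - 2))" using V q by (intro mult_left_mono) auto
    then show ?thesis by (simp add: algebra_simps)
  qed
  have s2: "3 * ((V - 1) * (V + q - 1)) \<le> 2 * (V * V * (q - 1))"
    using s1 q by (simp add: algebra_simps)
  have s3: "3 * (A - 1) \<ge> 2 * A" using A by simp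
  have slope: "(V - 1) * (A * (q - 1) + A * V - 1) \<le> V * V * (q - 1) * (A - 1)"
  proof -
    have "3 * ((V - 1) * (A * (q - 1) + A * V - 1)) \<le> 3 * ((V - 1) * (V + q - 1)) * A"
      using V q A by (simp add: algebra_simps)
    also have "\<dots> \<le> 2 * (V * V * (q - 1)) * A" using s2 A by (intro mult_right_mono) auto
    also have "\<dots> = (V * V * (q - 1)) * (2 * A)" by simp
    also have "\<dots> \<le> (V * V * (q - 1)) * (3 * (A - 1))" using s3 q by (intro mult_left_mono) auto
    finally show ?thesis by (simp add: algebra_simps)
  qed
  have base: "0 < (q - 1) * (A - 1) * ((V - 1) * (V - 1))" using q A V by (intro mult_pos_pos) auto
  have Wb: "V * (q - 1) * (A - 1) * (W - 1) \<ge> V * (q - 1) * (A - 1) * (U * V - 1)"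
    using W q A V by (intro mult_left_mono) auto
  have lin: "(U - 1) * ((V - 1) * (A * (q - 1) + A * V - 1)) \<le> (U - 1) * (V * V * (q - 1) * (A - 1))"
    using slope U by (intro mult_left_mono) auto
  have "(V - 1) * ((A * U - 1) * (q - 1) + (U - 1) * (A * V - 1))
       = (q - 1) * (A - 1) * (V - 1) + (U - 1) * ((V - 1) * (A * (q - 1) + A * V - 1))"
    by (simp add: algebra_simps)
  also have "\<dots> < (q - 1) * (A - 1) * (V - 1) + (q - 1) * (A - 1) * ((V - 1) * (V - 1)) + (U - 1) * (V * V * (q - 1) * (A - 1))"
    using base lin by linarith
  also have "\<dots> = V * (q - 1) * (A - 1) * (U * V - 1)" by (simp add: algebra_simps)
  also have "\<dots> \<le> V * (q - 1) * (A - 1) * (W - 1)" using Wb .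
  finally show ?thesis unfolding A_def by (simp add: algebra_simps)
qed



lemma alt:
  fixes f :: "nat \<Rightarrow> real"
  assumes "\<forall>p<N. f (Suc p) \<le> f p" "\<forall>p\<le>N. 0 \<le> f p"
  shows "0 \<le> (\<Sum>p\<le>N. (-1)^p * f p) \<and> (\<Sum>p\<le>N. (-1)^p * f p) \<le> f 0
         \<and> (0 < N \<longrightarrow> f 0 - f 1 \<le> (\<Sum>p\<le>N. (-1)^p * f p))"
  using assms
proof (induction N arbitrary: f)
  case 0 then show ?case by simp
next
  case (Suc N)
  have IH: "0 \<le> (\<Sum>p\<le>N. (-1)^p * f (Suc p)) \<and> (\<Sum>p\<le>N. (-1)^p * f (Suc p)) \<le> f 1"
    using Suc.IH[of "\<lambda>p. f (Suc p)"] Suc.prems by auto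
  have eq: "(\<Sum>p\<le>Suc N. (-1)^p * f p) = f 0 - (\<Sum>p\<le>N. (-1)^p * f (Suc p))"
    by (subst sum.atMost_Suc_shift) (simp add: sum_negf)
  have "f 1 \<le> f 0" using Suc.prems(1) by auto
  then show ?case using eq IH by auto
qed

lemma altT:
  fixes f :: "nat \<Rightarrow> real"
  assumes k0: "k0 \<le> N" and z: "\<And>k. k < k0 \<Longrightarrow> f k = 0"
    and mono: "\<And>k. k0 \<le> k \<Longrightarrow> k < N \<Longrightarrow> f (Suc k) \<le> f k"
    and nn: "\<And>k. 0 \<le> f k"
  shows "\<bar>\<Sum>k\<le>N. (-1)^k * f k\<bar> \<le> f k0 \<and> f k0 - f (Suc k0) \<le> \<bar>\<Sum>k\<le>N. (-1)^k * f k\<bar>"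
proof -
  have split: "{..N} = {..<k0} \<union> {k0..N}" using k0 by auto
  have "(\<Sum>k\<le>N. (-1)^k * f k) = (\<Sum>k\<in>{..<k0}. (-1)^k * f k) + (\<Sum>k\<in>{k0..N}. (-1)^k * f k)"
    unfolding split by (rule sum.union_disjoint) auto
  also have "(\<Sum>k\<in>{..<k0}. (-1)^k * f k) = 0" using z by simp
  also have "(\<Sum>k\<in>{k0..N}. (-1)^k * f k) = (\<Sum>p\<in>{0..N-k0}. (-1)^(p+k0) * f (p+k0))"
    using sum.shift_bounds_cl_nat_ivl[of "\<lambda>k. (-1)^k * f k" 0 k0 "N-k0"] k0 by simp
  also have "\<dots> = (-1)^k0 * (\<Sum>p\<le>N-k0. (-1)^p * f (k0 + p))"
    by (simp add: sum_distrib_left power_add atLeast0AtMost algebra_simps)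
  finally have S: "\<bar>\<Sum>k\<le>N. (-1)^k * f k\<bar> = \<bar>\<Sum>p\<le>N-k0. (-1)^p * f (k0 + p)\<bar>"
    by (simp add: abs_mult)
  have A: "0 \<le> (\<Sum>p\<le>N-k0. (-1)^p * f (k0 + p)) \<and> (\<Sum>p\<le>N-k0. (-1)^p * f (k0 + p)) \<le> f (k0 + 0)
         \<and> (0 < N - k0 \<longrightarrow> f (k0 + 0) - f (k0 + 1) \<le> (\<Sum>p\<le>N-k0. (-1)^p * f (k0 + p)))"
    by (rule alt[of "N - k0" "\<lambda>p. f (k0 + p)"]) (use mono nn in auto)
  show ?thesis
  proof (cases "0 < N - k0")
    case True then show ?thesis using A S by auto
  next
    case False
    then have "N - k0 = 0" by simp
    then show ?thesis using S nn[of "Suc k0"] nn[of k0] by simp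
  qed
qed


definition T :: "real \<Rightarrow> nat \<Rightarrow> nat \<Rightarrow> nat \<Rightarrow> nat \<Rightarrow> nat \<Rightarrow> real" where
 "T q m d j i k = (if k \<le> i then q ^ (j * (j - k) + (k choose 2)) * P q i (i - k) * P q (d - i + k) j * P q (m - k) (m - j) else 0)"

lemma Geig_T:
  assumes q: "q > 1" and id: "i \<le> d" and jd: "j \<le> d" and dm: "d \<le> m" and n: "n = m + d"
  shows "Geig q (int n) (int d) (int j) (int i) = (\<Sum>k\<le>i. (-1)^k * T q m d j i k)"
proof -
  let ?g = "\<lambda>h. (-1) ^ nat (int i - h) * q ^ (nat (int j * (int j - int i + h)) + (nat (int i - h) choose 2))
      * gbinom q (int i) h * gbinom q (int d - h) (int j) * gbinom q (int n - int d - int i + h) (int n - int d - int j)"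
  have Seq: "{max 0 (int i - int j)..min (int i) (int d - int j)} = (\<lambda>k. int i - int k) ` {i + j - d..min i j}"
  proof
    show "{max 0 (int i - int j)..min (int i) (int d - int j)} \<subseteq> (\<lambda>k. int i - int k) ` {i + j - d..min i j}"
    proof
      fix h assume h: "h \<in> {max 0 (int i - int j)..min (int i) (int d - int j)}"
      have "h = int i - int (nat (int i - h))" using h by auto
      moreover have "nat (int i - h) \<in> {i + j - d..min i j}" using h by auto
      ultimately show "h \<in> (\<lambda>k. int i - int k) ` {i + j - d..min i j}" by blast
    qed
    show "(\<lambda>k. int i - int k) ` {i + j - d..min i j} \<subseteq> {max 0 (int i - int j)..min (int i) (int d - int j)}"
      by auto
  qed
  have inj: "inj_on (\<lambda>k. int i - int k) {i + j - d..min i j}" by (auto simp: inj_on_def)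
  have "Geig q (int n) (int d) (int j) (int i) = sum ?g ((\<lambda>k. int i - int k) ` {i + j - d..min i j})"
    unfolding Geig_def Seq ..
  also have "\<dots> = (\<Sum>k\<in>{i + j - d..min i j}. ?g (int i - int k))"
    by (rule sum.reindex[OF inj, unfolded comp_def])
  also have "\<dots> = (\<Sum>k\<in>{i + j - d..min i j}. (-1)^k * T q m d j i k)"
  proof (rule sum.cong[OF refl])
    fix k assume k: "k \<in> {i + j - d..min i j}"
    have e1: "nat (int i - (int i - int k)) = k" by simp
    have e2: "nat (int j * (int j - int i + (int i - int k))) = j * (j - k)"
    proof -
      have "int j - int i + (int i - int k) = int (j - k)" using k by (simp add: of_nat_diff)
      then have "int j * (int j - int i + (int i - int k)) = int (j * (j - k))" by (simp only: of_nat_mult)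
      then show ?thesis by (simp only: nat_int)
    qed
    have e3: "int i - int k = int (i - k)" using k by auto
    have e4: "int d - (int i - int k) = int (d - i + k)" using k id by auto
    have km: "k \<le> m" using k id dm by auto
    have e5: "int n - int d - int i + (int i - int k) = int (m - k)" using km unfolding n by simp
    have e6: "int n - int d - int j = int (m - j)" using jd dm unfolding n by simp
    have "?g (int i - int k) = (-1)^k * q ^ (j * (j - k) + (k choose 2))
      * gbinom q (int i) (int (i - k)) * gbinom q (int (d - i + k)) (int j) * gbinom q (int (m - k)) (int (m - j))"
      by (simp only: e1 e2 e4 e5 e6 flip: e3)
    then show "?g (int i - int k) = (-1)^k * T q m d j i k"
      unfolding T_def gbinom_P using k by simp
  qed
  also have "\<dots> = (\<Sum>k\<le>i. (-1)^k * T q m d j i k)"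
  proof (rule sum.mono_neutral_left)
    show "{i + j - d..min i j} \<subseteq> {..i}" by auto
    show "\<forall>k\<in>{..i} - {i + j - d..min i j}. (-1)^k * T q m d j i k = 0"
    proof
      fix k assume k: "k \<in> {..i} - {i + j - d..min i j}"
      show "(-1)^k * T q m d j i k = 0"
      proof (cases "k < i + j - d")
        case True
        then have "P q (d - i + k) j = 0" using Pzero[OF q] id by auto
        then show ?thesis by (simp add: T_def)
      next
        case False
        then have "j < k" "k \<le> i" using k by auto
        then have "P q (m - k) (m - j) = 0" using Pzero[OF q] id dm by auto
        then show ?thesis by (simp add: T_def)
      qed
    qed
  qed simp
  finally show ?thesis .
qed



lemma mono_abs:
  fixes q B X Y E W cc a1 a2 b1 b2 c1 c2 :: real
  assumes q: "q \<ge> 3" and B: "B \<ge> 1" and X: "X \<ge> q" and Y: "Y \<ge> q" and E: "E \<ge> q" and W: "W \<ge> X * Y"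
    and ea: "a2 * (q * B - 1) = a1 * (X - 1)"
    and eb: "b2 * (E - 1) = b1 * (E * Y * B - 1)"
    and ec: "c2 * (W - 1) = c1 * (Y - 1)"
    and nn: "a1 \<ge> 0" "b1 \<ge> 0" "c1 \<ge> 0" "cc \<ge> 0"
  shows "cc * B * a2 * b2 * c2 \<le> cc * (Y * B) * a1 * b1 * c1"
proof -
  have qB: "q * B - 1 > 0"
  proof -
    have "3 * 1 \<le> q * B" using q B by (intro mult_mono) auto
    then show ?thesis by simp
  qed
  have E1: "E - 1 > 0" using E q by simp
  have XY: "X * Y \<ge> 3 * 3" using X Y q by (intro mult_mono) auto
  have W1: "W - 1 > 0" using W XY by simp
  have a2: "a2 = a1 * (X - 1) / (q * B - 1)" using ea qB by (simp add: eq_divide_eq)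
  have b2: "b2 = b1 * (E * Y * B - 1) / (E - 1)" using eb E1 by (simp add: eq_divide_eq)
  have c2: "c2 = c1 * (Y - 1) / (W - 1)" using ec W1 by (simp add: eq_divide_eq)
  have D: "(q * B - 1) * (E - 1) * (W - 1) > 0" using qB E1 W1 by simp
  have p: "B * ((X - 1) * (E * Y * B - 1) * (Y - 1)) \<le> B * (Y * (q * B - 1) * (E - 1) * (W - 1))"
    using polyM[OF q B X Y E W] B by (intro mult_left_mono) auto
  have r: "B * (X - 1) * (E * Y * B - 1) * (Y - 1) / ((q * B - 1) * (E - 1) * (W - 1)) \<le> Y * B"
    using p D by (simp add: divide_le_eq algebra_simps)
  have "cc * B * a2 * b2 * c2 = (cc * a1 * b1 * c1) * (B * (X - 1) * (E * Y * B - 1) * (Y - 1) / ((q * B - 1) * (E - 1) * (W - 1)))"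
    unfolding a2 b2 c2 by (simp add: field_simps)
  also have "\<dots> \<le> (cc * a1 * b1 * c1) * (Y * B)" using r nn by (intro mult_left_mono) auto
  also have "\<dots> = cc * (Y * B) * a1 * b1 * c1" by simp
  finally show ?thesis .
qed

lemma keyA_abs:
  fixes q Qa Qj Qi Qm K T0 T0' T1 :: real
  assumes q: "q \<ge> 3" and a: "Qa \<ge> q" and j: "Qj \<ge> q" and i: "Qi \<ge> 1" and m: "Qm \<ge> q * Qi * Qj"
    and K: "K > 0" and e0: "T0 = K * Qj"
    and e1: "T0' * (Qa * Qj - 1) = K * Qj * (Qa - 1)"
    and e2: "T1 * ((q - 1) * (q * Qa - 1) * (Qm - 1)) = K * ((Qi - 1) * (q * Qa * Qj - 1) * (Qj - 1))"
  shows "T0' + T1 < T0"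
proof -
  have aj: "Qa * Qj \<ge> 3 * 3" using a j q by (intro mult_mono) auto
  have qa: "q * Qa \<ge> 3 * 3" using a q by (intro mult_mono) auto
  have qij: "q * Qi * Qj \<ge> 3 * 1 * 3" using i j q by (intro mult_mono) auto
  have D: "(q - 1) * (q * Qa - 1) * (Qm - 1) > 0" using q qa qij m by simp
  have t0': "T0' = K * (Qj * (Qa - 1) / (Qa * Qj - 1))" using e1 aj by (simp add: eq_divide_eq)
  have r1: "Qj * (Qa - 1) / (Qa * Qj - 1) \<le> 1" using aj j q by (simp add: divide_le_eq algebra_simps)
  have t1: "T1 = K * ((Qi - 1) * (q * Qa * Qj - 1) * (Qj - 1)) / ((q - 1) * (q * Qa - 1) * (Qm - 1))"
  proof -
    have Dne: "(q - 1) * (q * Qa - 1) * (Qm - 1) \<noteq> 0" using D by linarith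
    have "T1 = T1 * ((q - 1) * (q * Qa - 1) * (Qm - 1)) / ((q - 1) * (q * Qa - 1) * (Qm - 1))"
      by (rule nonzero_mult_div_cancel_right[OF Dne, symmetric])
    then show ?thesis by (simp only: e2)
  qed
  have pa: "4 * ((Qi - 1) * (q * Qa * Qj - 1) * (Qj - 1)) \<le> ((q - 1) * (q * Qa - 1) * (Qm - 1)) * Qj"
    by (rule polyA[OF q a j i m])
  have r2: "((Qi - 1) * (q * Qa * Qj - 1) * (Qj - 1)) / ((q - 1) * (q * Qa - 1) * (Qm - 1)) \<le> Qj / 4"
    using pa D by (simp add: divide_le_eq field_simps)
  have "T0' + T1 \<le> K * 1 + K * (Qj / 4)"
    unfolding t0' t1 using r1 r2 K
    by (metis add_mono less_eq_real_def mult_left_mono times_divide_eq_right)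
  also have "\<dots> = K * (1 + Qj / 4)" by (simp add: algebra_simps)
  also have "\<dots> < K * Qj" using K j q by (intro mult_strict_left_mono) auto
  finally show ?thesis using e0 by simp
qed

lemma keyB_abs:
  fixes q B U V W K R S :: real
  assumes q: "q \<ge> 3" and B: "B \<ge> 1" and U: "U \<ge> 1" and V: "V \<ge> q" and W: "W \<ge> U * V"
    and K: "K > 0"
    and eR: "R * ((q * B - 1) * (W - 1)) = K * B * ((q * B * U - 1) * (V - 1))"
    and eS: "S * ((q * B - 1) * (q - 1) * (W - 1)) = K * B * ((U - 1) * (q * B * V - 1) * (V - 1))"
  shows "R + S < K * (B * V)"
proof -
  have qB: "q * B - 1 > 0"
  proof -
    have "3 * 1 \<le> q * B" using q B by (intro mult_mono) auto
    then show ?thesis by simp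
  qed
  have UV: "U * V \<ge> 1 * 3" using U V q by (intro mult_mono) auto
  have W1: "W - 1 > 0" using W UV by simp
  have D: "(q * B - 1) * (q - 1) * (W - 1) > 0" using qB q W1 by simp
  have "(R + S) * ((q * B - 1) * (q - 1) * (W - 1))
      = R * ((q * B - 1) * (W - 1)) * (q - 1) + S * ((q * B - 1) * (q - 1) * (W - 1))"
    by (simp add: algebra_simps)
  also have "\<dots> = (K * B) * ((V - 1) * ((q * B * U - 1) * (q - 1) + (U - 1) * (q * B * V - 1)))"
    unfolding eR eS by (simp add: algebra_simps)
  also have "\<dots> < (K * B) * (V * (q - 1) * (q * B - 1) * (W - 1))"
    using polyB[OF q B U V W] K B by (intro mult_strict_left_mono) auto
  also have "\<dots> = (K * (B * V)) * ((q * B - 1) * (q - 1) * (W - 1))" by (simp add: algebra_simps)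
  finally show ?thesis using D by (simp only: mult_less_cancel_right)
qed



lemma T_nn: assumes "q > 1" shows "0 \<le> T q m d j i k"
  unfolding T_def using Pnn[OF assms] assms by auto

lemma T_low: assumes "q > 1" "i \<le> d" "k < i + j - d" shows "T q m d j i k = 0"
proof -
  have "P q (d - i + k) j = 0" using Pzero[OF assms(1)] assms(2,3) by auto
  then show ?thesis by (simp add: T_def)
qed

lemma choose2: "Suc k choose 2 = (k choose 2) + k"
  by (simp add: numeral_2_eq_2)

lemma pge: fixes q :: real assumes "q \<ge> 3" "1 \<le> a" shows "q ^ a \<ge> q"
  using power_increasing[of 1 a q] assms by simp

lemma pge1: fixes q :: real assumes "q \<ge> 3" shows "q ^ a \<ge> 1"
  using assms by (simp add: one_le_power)

lemma T_mono:
  assumes q: "q \<ge> 3" and id: "i \<le> d" and jd: "j \<le> d" and dm: "d \<le> m"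
    and k0: "i + j - d \<le> k" and ki: "k < i"
  shows "T q m d j i (Suc k) \<le> T q m d j i k"
proof (cases "j < Suc k")
  case True
  have q1: "q > 1" using q by simp
  have "P q (m - Suc k) (m - j) = 0" using Pzero[OF q1] True ki id dm by auto
  then have "T q m d j i (Suc k) = 0" by (simp add: T_def)
  then show ?thesis using T_nn[OF q1, of m d j i k] by simp
next
  case False
  then have kj: "Suc k \<le> j" by simp
  have q1: "q > 1" using q by simp
  define c where "c = q ^ (j * (j - Suc k) + (k choose 2))"
  define B where "B = q ^ k"
  define X where "X = q ^ (i - k)"
  define Y where "Y = q ^ (j - k)"
  define E where "E = q ^ (Suc (d - i + k) - j)"
  define W where "W = q ^ (m - k)"
  define a1 where "a1 = P q i (i - k)"
  define a2 where "a2 = P q i (i - Suc k)"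
  define b1 where "b1 = P q (d - i + k) j"
  define b2 where "b2 = P q (Suc (d - i + k)) j"
  define c1 where "c1 = P q (m - k) (m - j)"
  define c2 where "c2 = P q (m - Suc k) (m - j)"
  have x1: "j * (j - k) + (k choose 2) = (j * (j - Suc k) + (k choose 2)) + (j - k) + k"
  proof -
    have "j - k = Suc (j - Suc k)" using kj by simp
    then have "j * (j - k) = j * (j - Suc k) + j" by simp
    then show ?thesis using kj by simp
  qed
  have pw1: "q ^ (j * (j - k) + (k choose 2)) = c * (Y * B)"
    unfolding c_def Y_def B_def by (subst x1) (simp only: power_add mult.assoc)
  have x2: "j * (j - Suc k) + (Suc k choose 2) = (j * (j - Suc k) + (k choose 2)) + k"
    by (simp add: choose2)
  have pw2: "q ^ (j * (j - Suc k) + (Suc k choose 2)) = c * B"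
    unfolding c_def B_def by (subst x2) (simp only: power_add)
  have Tk: "T q m d j i k = c * (Y * B) * a1 * b1 * c1"
  proof -
    have "T q m d j i k = q ^ (j * (j - k) + (k choose 2)) * a1 * b1 * c1"
      unfolding T_def a1_def b1_def c1_def using ki by simp
    then show ?thesis by (simp only: pw1)
  qed
  have TSk: "T q m d j i (Suc k) = c * B * a2 * b2 * c2"
  proof -
    have "T q m d j i (Suc k) = q ^ (j * (j - Suc k) + (Suc k choose 2)) * a2 * b2 * c2"
      unfolding T_def a2_def b2_def c2_def using ki by simp
    then show ?thesis by (simp only: pw2)
  qed
  have ea: "a2 * (q * B - 1) = a1 * (X - 1)"
  proof -
    have e: "Suc (i - Suc k) = i - k" "i - (i - Suc k) = Suc k" using ki by auto
    show ?thesis using L1[OF q1, of i "i - Suc k"] unfolding e a1_def a2_def X_def B_def by simp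
  qed
  have eb: "b2 * (E - 1) = b1 * (E * Y * B - 1)"
  proof -
    have e: "Suc (d - i + k) = (Suc (d - i + k) - j) + (j - k) + k" using k0 kj id jd by auto
    have "q ^ Suc (d - i + k) = E * Y * B" unfolding E_def Y_def B_def
      by (subst e) (simp only: power_add)
    then show ?thesis using L2[OF q1, of j "d - i + k"] k0 id jd unfolding b1_def b2_def E_def by simp
  qed
  have ec: "c2 * (W - 1) = c1 * (Y - 1)"
  proof -
    have e: "Suc (m - Suc k) = m - k" "Suc (m - Suc k) - (m - j) = j - k" using ki id dm kj jd by auto
    show ?thesis using L2[OF q1, of "m - j" "m - Suc k"] kj e unfolding c1_def c2_def W_def Y_def
      by simp
  qed
  have B: "B \<ge> 1" unfolding B_def using pge1[OF q] .
  have X: "X \<ge> q" unfolding X_def using pge[OF q] ki by simp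
  have Y: "Y \<ge> q" unfolding Y_def using pge[OF q] kj by simp
  have E: "E \<ge> q" unfolding E_def using pge[OF q] k0 id jd by simp
  have W: "W \<ge> X * Y"
  proof -
    have "X * Y = q ^ (i - k + (j - k))" unfolding X_def Y_def by (simp add: power_add)
    also have "\<dots> \<le> q ^ (m - k)" using k0 kj ki id jd dm q by (intro power_increasing) auto
    finally show ?thesis unfolding W_def .
  qed
  have nn: "a1 \<ge> 0" "b1 \<ge> 0" "c1 \<ge> 0" "c \<ge> 0"
    unfolding a1_def b1_def c1_def c_def using Pnn[OF q1] q by auto
  show ?thesis unfolding Tk TSk
    by (rule mono_abs[OF q B X Y E W ea eb ec nn])
qed



lemma keyA:
  assumes q: "q \<ge> 3" and ij: "i + j < d" and dm: "d \<le> m" and j1: "1 \<le> j"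
  shows "T q m d j (Suc i) 0 + T q m d j i 1 < T q m d j i 0"
proof -
  have q1: "q > 1" using q by simp
  define c where "c = q ^ (j * (j - 1))"
  define Qa where "Qa = q ^ (d - i - j)"
  define Qj where "Qj = q ^ j"
  define Qi where "Qi = q ^ i"
  define Qm where "Qm = q ^ m"
  define K where "K = c * (P q (d - i) j * P q m (m - j))"
  have z0: "(0::nat) choose 2 = 0" "(1::nat) choose 2 = 0" by (simp_all add: numeral_2_eq_2)
  have pj: "q ^ (j * j) = c * Qj"
  proof -
    have "j * j = j * (j - 1) + j" using j1 by (cases j) auto
    then show ?thesis unfolding c_def Qj_def by (simp only: power_add)
  qed
  have pdi: "q ^ (d - i) = Qa * Qj"
  proof -
    have "(d - i - j) + j = d - i" using ij by auto
    then show ?thesis unfolding Qa_def Qj_def power_add[symmetric] by simp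
  qed
  have T0: "T q m d j i 0 = K * Qj"
    unfolding T_def K_def using Pdiag[OF q1, of i] pj by (simp add: numeral_2_eq_2)
  have T0': "T q m d j (Suc i) 0 = c * Qj * (P q (d - Suc i) j * P q m (m - j))"
    unfolding T_def using Pdiag[OF q1, of "Suc i"] pj by (simp add: numeral_2_eq_2)
  have l2: "P q (d - i) j * (q ^ (d - i - j) - 1) = P q (d - Suc i) j * (q ^ (d - i) - 1)"
  proof -
    have e: "Suc (d - Suc i) = d - i" "Suc (d - Suc i) - j = d - i - j" using ij by auto
    show ?thesis using L2[OF q1, of j "d - Suc i"] ij unfolding e by simp
  qed
  have e1: "T q m d j (Suc i) 0 * (Qa * Qj - 1) = K * Qj * (Qa - 1)"
  proof -
    have "T q m d j (Suc i) 0 * (Qa * Qj - 1) = c * Qj * P q m (m - j) * (P q (d - Suc i) j * (q ^ (d - i) - 1))"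
      unfolding T0' pdi by (simp add: algebra_simps)
    also have "\<dots> = c * Qj * P q m (m - j) * (P q (d - i) j * (Qa - 1))"
      unfolding l2[symmetric] Qa_def ..
    also have "\<dots> = K * Qj * (Qa - 1)" unfolding K_def by (simp add: algebra_simps)
    finally show ?thesis .
  qed
  have e2: "T q m d j i 1 * ((q - 1) * (q * Qa - 1) * (Qm - 1)) = K * ((Qi - 1) * (q * Qa * Qj - 1) * (Qj - 1))"
  proof (cases "i = 0")
    case True
    then show ?thesis by (simp add: T_def Qi_def)
  next
    case False
    have la: "P q i (i - 1) * (q - 1) = Qi - 1"
    proof -
      have e: "Suc (i - 1) = i" "i - (i - 1) = 1" using False by auto
      show ?thesis using L1[OF q1, of i "i - 1"] Pdiag[OF q1, of i] unfolding e Qi_def by simp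
    qed
    have lb: "P q (d - i + 1) j * (q * Qa - 1) = P q (d - i) j * (q * Qa * Qj - 1)"
    proof -
      have e: "Suc (d - i) - j = Suc (d - i - j)" using ij by auto
      have "q ^ Suc (d - i) = q * Qa * Qj" using pdi by simp
      then show ?thesis using L2[OF q1, of j "d - i"] ij unfolding e Qa_def by simp
    qed
    have lc: "P q (m - 1) (m - j) * (Qm - 1) = P q m (m - j) * (Qj - 1)"
    proof -
      have e: "Suc (m - 1) = m" "m - (m - j) = j" using ij dm by auto
      show ?thesis using L2[OF q1, of "m - j" "m - 1"] ij dm j1 unfolding e Qm_def Qj_def by simp
    qed
    have T1: "T q m d j i 1 = c * P q i (i - 1) * P q (d - i + 1) j * P q (m - 1) (m - j)"
      unfolding T_def c_def using False by (simp add: numeral_2_eq_2)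
    have "T q m d j i 1 * ((q - 1) * (q * Qa - 1) * (Qm - 1))
        = c * (P q i (i - 1) * (q - 1)) * (P q (d - i + 1) j * (q * Qa - 1)) * (P q (m - 1) (m - j) * (Qm - 1))"
      unfolding T1 by (simp add: algebra_simps)
    also have "\<dots> = K * ((Qi - 1) * (q * Qa * Qj - 1) * (Qj - 1))"
      unfolding la lb lc K_def by (simp add: algebra_simps)
    finally show ?thesis .
  qed
  have a: "Qa \<ge> q" unfolding Qa_def using pge[OF q] ij by simp
  have jj: "Qj \<ge> q" unfolding Qj_def using pge[OF q] j1 by simp
  have ii: "Qi \<ge> 1" unfolding Qi_def using pge1[OF q] .
  have mm: "Qm \<ge> q * Qi * Qj"
  proof -
    have "q * Qi * Qj = q ^ (1 + i + j)" unfolding Qi_def Qj_def by (simp add: power_add)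
    also have "\<dots> \<le> q ^ m" using ij dm q by (intro power_increasing) auto
    finally show ?thesis unfolding Qm_def .
  qed
  have K: "K > 0" unfolding K_def c_def using Ppos[OF q1] ij dm q by auto
  show ?thesis by (rule keyA_abs[OF q a jj ii mm K T0 e1 e2])
qed



lemma keyB:
  assumes q: "q \<ge> 3" and id: "i < d" and jd: "j \<le> d" and dm: "d \<le> m" and dij: "d \<le> i + j"
  shows "T q m d j (Suc i) (Suc (i + j - d)) + T q m d j i (Suc (i + j - d)) < T q m d j i (i + j - d)"
proof -
  have q1: "q > 1" using q by simp
  define k where "k = i + j - d"
  define s where "s = d - i"
  define t where "t = d - j"
  have ik: "i = k + t" and jk: "j = k + s" and s1: "1 \<le> s" and dk: "d = k + s + t"
    unfolding k_def s_def t_def using id jd dij by auto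
  define c where "c = q ^ (j * (j - Suc k) + (k choose 2))"
  define B where "B = q ^ k"
  define U where "U = q ^ t"
  define V where "V = q ^ s"
  define W where "W = q ^ (m - k)"
  define K where "K = c * P q i t * P q (m - k) (m - j)"
  have pw1: "q ^ (j * (j - k) + (k choose 2)) = c * (B * V)"
  proof -
    have "j * (j - k) = j * (j - Suc k) + j" using jk s1 by (cases s) auto
    then have "j * (j - k) + (k choose 2) = (j * (j - Suc k) + (k choose 2)) + (k + s)" using jk by simp
    then show ?thesis unfolding c_def B_def V_def by (simp only: power_add mult.assoc)
  qed
  have pw2: "q ^ (j * (j - Suc k) + (Suc k choose 2)) = c * B"
  proof -
    have "j * (j - Suc k) + (Suc k choose 2) = (j * (j - Suc k) + (k choose 2)) + k" by (simp add: choose2)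
    then show ?thesis unfolding c_def B_def by (simp only: power_add)
  qed
  have Tk: "T q m d j i k = K * (B * V)"
  proof -
    have e: "i - k = t" "d - i + k = j" using ik jk dk by auto
    have "T q m d j i k = q ^ (j * (j - k) + (k choose 2)) * P q i t * P q j j * P q (m - k) (m - j)"
      unfolding T_def e[symmetric] using ik by simp
    then show ?thesis unfolding pw1 K_def Pdiag[OF q1] by (simp add: algebra_simps)
  qed
  have lc: "P q (m - Suc k) (m - j) * (W - 1) = P q (m - k) (m - j) * (V - 1)"
  proof -
    have e: "Suc (m - Suc k) = m - k" "Suc (m - Suc k) - (m - j) = s" using jk dk dm s1 by auto
    show ?thesis using L2[OF q1, of "m - j" "m - Suc k"] jk dk dm s1 unfolding e W_def V_def by simp
  qed
  have eR: "T q m d j (Suc i) (Suc k) * ((q * B - 1) * (W - 1)) = K * B * ((q * B * U - 1) * (V - 1))"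
  proof -
    have e: "Suc i - Suc k = t" "d - Suc i + Suc k = j" using ik jk dk id by auto
    have TR: "T q m d j (Suc i) (Suc k) = c * B * P q (Suc i) t * P q (m - Suc k) (m - j)"
    proof -
      have "T q m d j (Suc i) (Suc k) = q ^ (j * (j - Suc k) + (Suc k choose 2)) * P q (Suc i) t * P q j j * P q (m - Suc k) (m - j)"
        unfolding T_def e[symmetric] using ik by simp
      then show ?thesis unfolding pw2 Pdiag[OF q1] by simp
    qed
    have la: "P q (Suc i) t * (q * B - 1) = P q i t * (q * B * U - 1)"
    proof -
      have e2: "Suc i - t = Suc k" using ik by auto
      have p1: "q ^ Suc i = q * B * U" unfolding B_def U_def ik by (simp add: power_add)
      have p2: "q ^ Suc k = q * B" unfolding B_def by simp
      have "t \<le> i" using ik by simp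
      from L2[OF q1 this] show ?thesis by (simp only: e2 p1 p2)
    qed
    have "T q m d j (Suc i) (Suc k) * ((q * B - 1) * (W - 1))
        = c * B * (P q (Suc i) t * (q * B - 1)) * (P q (m - Suc k) (m - j) * (W - 1))"
      unfolding TR by (simp add: algebra_simps)
    also have "\<dots> = K * B * ((q * B * U - 1) * (V - 1))"
      unfolding la lc K_def by (simp add: algebra_simps)
    finally show ?thesis .
  qed
  have eS: "T q m d j i (Suc k) * ((q * B - 1) * (q - 1) * (W - 1)) = K * B * ((U - 1) * (q * B * V - 1) * (V - 1))"
  proof (cases "Suc k \<le> i")
    case False
    then have "t = 0" using ik by simp
    then show ?thesis using False by (simp add: T_def U_def)
  next
    case True
    have e: "d - i + Suc k = Suc j" using ik jk dk by auto
    have TS: "T q m d j i (Suc k) = c * B * P q i (i - Suc k) * P q (Suc j) j * P q (m - Suc k) (m - j)"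
    proof -
      have "T q m d j i (Suc k) = q ^ (j * (j - Suc k) + (Suc k choose 2)) * P q i (i - Suc k) * P q (Suc j) j * P q (m - Suc k) (m - j)"
        unfolding T_def e[symmetric] using True by simp
      then show ?thesis unfolding pw2 by simp
    qed
    have la: "P q i (i - Suc k) * (q * B - 1) = P q i t * (U - 1)"
    proof -
      have e2: "Suc (i - Suc k) = t" "i - (i - Suc k) = Suc k" using True ik by auto
      show ?thesis using L1[OF q1, of i "i - Suc k"] unfolding e2 B_def U_def by simp
    qed
    have lb: "P q (Suc j) j * (q - 1) = q * B * V - 1"
    proof -
      have "q ^ Suc j = q * B * V" unfolding B_def V_def jk by (simp add: power_add)
      then show ?thesis using L2[OF q1, of j j] Pdiag[OF q1, of j] by simp
    qed
    have "T q m d j i (Suc k) * ((q * B - 1) * (q - 1) * (W - 1))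
        = c * B * (P q i (i - Suc k) * (q * B - 1)) * (P q (Suc j) j * (q - 1)) * (P q (m - Suc k) (m - j) * (W - 1))"
      unfolding TS by (simp add: algebra_simps)
    also have "\<dots> = K * B * ((U - 1) * (q * B * V - 1) * (V - 1))"
      unfolding la lb lc K_def by (simp add: algebra_simps)
    finally show ?thesis .
  qed
  have B: "B \<ge> 1" unfolding B_def using pge1[OF q] .
  have U: "U \<ge> 1" unfolding U_def using pge1[OF q] .
  have V: "V \<ge> q" unfolding V_def using pge[OF q] s1 by simp
  have W: "W \<ge> U * V"
  proof -
    have "U * V = q ^ (t + s)" unfolding U_def V_def by (simp add: power_add)
    also have "\<dots> \<le> q ^ (m - k)" using dk dm q by (intro power_increasing) auto
    finally show ?thesis unfolding W_def .
  qed
  have K: "K > 0" unfolding K_def c_def using Ppos[OF q1] ik jk dk dm q by auto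
  have "T q m d j (Suc i) (Suc k) + T q m d j i (Suc k) < K * (B * V)"
    by (rule keyB_abs[OF q B U V W K eR eS])
  then show ?thesis using Tk unfolding k_def by simp
qed



theorem theorem3p4:
  fixes q n d i j :: nat
  assumes "\<exists>p k. prime p \<and> k \<ge> 1 \<and> q = p ^ k"
    and "q \<ge> 3"
    and "2 * d \<le> n" and "1 \<le> d"
    and "i \<le> d - 1"
    and "1 \<le> j" and "j \<le> d"
  shows "\<bar>Geig (real q) (int n) (int d) (int j) (int i + 1)\<bar>
           < \<bar>Geig (real q) (int n) (int d) (int j) (int i)\<bar>"
proof -
  define m where "m = n - d"
  have n: "n = m + d" and dm: "d \<le> m" using assms(3) unfolding m_def by auto
  have q: "real q \<ge> 3" using assms(2) by simp
  have q1: "real q > 1" using assms(2) by simp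
  have id: "i < d" using assms(4,5) by auto
  have jd: "j \<le> d" and j1: "1 \<le> j" using assms by auto
  let ?T = "T (real q) m d j"
  have Gi: "Geig (real q) (int n) (int d) (int j) (int i) = (\<Sum>k\<le>i. (-1)^k * ?T i k)"
    by (rule Geig_T[OF q1]) (use id jd dm n in auto)
  have Gi1: "Geig (real q) (int n) (int d) (int j) (int i + 1) = (\<Sum>k\<le>Suc i. (-1)^k * ?T (Suc i) k)"
  proof -
    have e: "int i + 1 = int (Suc i)" by simp
    have "Geig (real q) (int n) (int d) (int j) (int (Suc i)) = (\<Sum>k\<le>Suc i. (-1)^k * ?T (Suc i) k)"
      by (rule Geig_T[OF q1]) (use id jd dm n in auto)
    then show ?thesis unfolding e .
  qed
  have A1: "\<bar>\<Sum>k\<le>i. (-1)^k * ?T i k\<bar> \<le> ?T i (i + j - d) \<and>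
            ?T i (i + j - d) - ?T i (Suc (i + j - d)) \<le> \<bar>\<Sum>k\<le>i. (-1)^k * ?T i k\<bar>"
  proof (rule altT)
    show "i + j - d \<le> i" using jd by simp
    show "\<And>k. k < i + j - d \<Longrightarrow> ?T i k = 0" using T_low[OF q1] id by auto
    show "\<And>k. i + j - d \<le> k \<Longrightarrow> k < i \<Longrightarrow> ?T i (Suc k) \<le> ?T i k"
      using T_mono[OF q] id jd dm by auto
    show "\<And>k. 0 \<le> ?T i k" using T_nn[OF q1] by auto
  qed
  have A2: "\<bar>\<Sum>k\<le>Suc i. (-1)^k * ?T (Suc i) k\<bar> \<le> ?T (Suc i) (Suc i + j - d) \<and>
            ?T (Suc i) (Suc i + j - d) - ?T (Suc i) (Suc (Suc i + j - d)) \<le> \<bar>\<Sum>k\<le>Suc i. (-1)^k * ?T (Suc i) k\<bar>"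
  proof (rule altT)
    show "Suc i + j - d \<le> Suc i" using jd by simp
    show "\<And>k. k < Suc i + j - d \<Longrightarrow> ?T (Suc i) k = 0" using T_low[OF q1] id by auto
    show "\<And>k. Suc i + j - d \<le> k \<Longrightarrow> k < Suc i \<Longrightarrow> ?T (Suc i) (Suc k) \<le> ?T (Suc i) k"
      using T_mono[OF q] id jd dm by auto
    show "\<And>k. 0 \<le> ?T (Suc i) k" using T_nn[OF q1] by auto
  qed
  have key: "?T (Suc i) (Suc i + j - d) + ?T i (Suc (i + j - d)) < ?T i (i + j - d)"
  proof (cases "i + j < d")
    case True
    then have e: "Suc i + j - d = 0" "i + j - d = 0" by auto
    show ?thesis unfolding e using keyA[OF q True dm j1] by simp
  next
    case False
    then have e: "Suc i + j - d = Suc (i + j - d)" by auto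
    show ?thesis unfolding e using keyB[OF q id jd dm] False by simp
  qed
  show ?thesis unfolding Gi Gi1 using A1 A2 key by linarith
qed


end
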